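(* Let $p_1,p_2\ge1$ be integers and let $0\le\alpha_1<p_1$, $0\le\alpha_2<p_2$. Then for every $k\in\mathbb R$, $$\int_{\mathbb R} D^{\alpha_1}_{-\infty,x}\phi_{p_1}(x)\,D^{\alpha_2}_{x,+\infty}\phi_{p_2}(x+k)\,dx = D^{\alpha_1+\alpha_2}_{-\infty,x}\phi_{p_1+p_2+1}(p_2+1-k),$$ $$\int_{\mathbb R} D^{\alpha_1}_{x,+\infty}\phi_{p_1}(x)\,D^{\alpha_2}_{-\infty,x}\phi_{p_2}(x+k)\,dx = D^{\alpha_1+\alpha_2}_{x,+\infty}\phi_{p_1+p_2+1}(p_2+1-k),$$ where $D^{\beta}_{\cdot}\phi_q(y)$ denotes the fractional derivative (as a function of $x$) evaluated at $x=y$.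
   Context: The cardinal B-spline $\phi_p:\mathbb R\to\mathbb R$ is defined by $\phi_0(t)=1$ for $t\in[0,1)$, $\phi_0(t)=0$ otherwise, and $\phi_p(t)=\frac{t}{p}\phi_{p-1}(t)+\frac{p+1-t}{p}\phi_{p-1}(t-1)$ for $p\ge1$; it belongs to $C^{p-1}(\mathbb R)$ and is supported on $[0,p+1]$. For a compactly supported function $u$ with absolutely continuous $(m-1)$-th derivative on $\mathbb R$, where $m$ is the integer with $m-1\le\alpha<m$, the half-axis Riemann–Liouville fractional derivatives are $D^{\alpha}_{-\infty,x}u(x)=\frac{1}{\Gamma(m-\alpha)}\frac{d^m}{dx^m}\int_{-\infty}^x (x-y)^{m-\alpha-1}u(y)\,dy$ and $D^{\alpha}_{x,+\infty}u(x)=\frac{(-1)^m}{\Gamma(m-\alpha)}\frac{d^m}{dx^m}\int_x^{+\infty}(y-x)^{m-\alpha-1}u(y)\,dy$. *)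

theory Defs
  imports "HOL-Analysis.Analysis"
begin

text \<open>Cardinal B-spline phi_p, defined by the Cox--de Boor recursion.\<close>
fun bspline :: "nat \<Rightarrow> real \<Rightarrow> real" where
  "bspline 0 t = (if 0 \<le> t \<and> t < 1 then 1 else 0)"
| "bspline (Suc p) t =
     t / real (Suc p) * bspline p t + (real (Suc p) + 1 - t) / real (Suc p) * bspline p (t - 1)"

definition frac_ord :: "real \<Rightarrow> nat" where
  "frac_ord \<alpha> = nat \<lfloor>\<alpha>\<rfloor> + 1"

definition RL_left :: "real \<Rightarrow> (real \<Rightarrow> real) \<Rightarrow> real \<Rightarrow> real" where
  "RL_left \<alpha> u x =
     (deriv ^^ frac_ord \<alpha>)
       (\<lambda>z. integral {..z} (\<lambda>y. (z - y) powr (real (frac_ord \<alpha>) - \<alpha> - 1) * u y)) x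
     / Gamma (real (frac_ord \<alpha>) - \<alpha>)"

definition RL_right :: "real \<Rightarrow> (real \<Rightarrow> real) \<Rightarrow> real \<Rightarrow> real" where
  "RL_right \<alpha> u x =
     (-1) ^ frac_ord \<alpha> / Gamma (real (frac_ord \<alpha>) - \<alpha>) *
     (deriv ^^ frac_ord \<alpha>)
       (\<lambda>z. integral {z..} (\<lambda>y. (y - z) powr (real (frac_ord \<alpha>) - \<alpha> - 1) * u y)) x"

end

theory Submission
  imports Defs
begin

definition tpr :: "real \<Rightarrow> real \<Rightarrow> real" where
  "tpr a t = (if 0 < t then t powr a else 0)"

lemma core_int_pos:
  assumes a: "a > -1" and b: "b > -1" and us: "u < s"
  shows "((\<lambda>x. tpr a (x - u) * tpr b (s - x)) has_integral
           (Beta (a+1) (b+1) * tpr (a+b+1) (s - u))) {u..s}"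
proof -
  define L where "L = s - u"
  have L: "L > 0" using us by (simp add: L_def)
  have B: "((\<lambda>t. t powr a * (1 - t) powr b) has_integral Beta (a+1) (b+1)) (cbox 0 1)"
    using has_integral_Beta_real[of "a+1" "b+1"] a b by simp
  have "((\<lambda>x. (\<lambda>t. t powr a * (1 - t) powr b) ((1/L) *\<^sub>R x + (- u/L)))
          has_integral (Beta (a+1) (b+1) /\<^sub>R (1/L) ^ DIM(real)))
          (cbox ((0 - (- u/L)) /\<^sub>R (1/L)) ((1 - (- u/L)) /\<^sub>R (1/L)))"
    by (rule has_integral_affinity'[OF B]) (use L in simp)
  also have "cbox ((0 - (- u/L)) /\<^sub>R (1/L)) ((1 - (- u/L)) /\<^sub>R (1/L)) = {u..s}"
    using L by (simp add: L_def field_simps)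
  finally have 1: "((\<lambda>x. ((x - u)/L) powr a * (1 - (x-u)/L) powr b) has_integral (L * Beta (a+1) (b+1))) {u..s}"
    by (simp add: field_simps diff_divide_distrib)
  have 2: "((\<lambda>x. L powr (a+b) * (((x - u)/L) powr a * (1 - (x-u)/L) powr b)) has_integral
            (L powr (a+b) * (L * Beta (a+1) (b+1)))) {u..s}"
    by (rule has_integral_mult_right[OF 1])
  show ?thesis
  proof (rule has_integral_eq_rhs, rule has_integral_cong[THEN iffD1, OF _ 2])
    fix x assume x: "x \<in> {u..s}"
    show "L powr (a+b) * (((x - u)/L) powr a * (1 - (x-u)/L) powr b) = tpr a (x - u) * tpr b (s - x)"
    proof (cases "x = u \<or> x = s")
      case True then show ?thesis using L by (auto simp: tpr_def L_def)
    next
      case False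
      then have xu: "x - u > 0" "s - x > 0" using x by auto
      have e: "1 - (x-u)/L = (s-x)/L" using L by (simp add: L_def field_simps)
      have "L powr (a+b) * (((x - u)/L) powr a * (1 - (x-u)/L) powr b)
           = (L powr a * L powr b) * ((x - u) powr a / L powr a * ((s-x) powr b / L powr b))"
        using xu L by (simp add: e powr_divide powr_add)
      also have "\<dots> = (x - u) powr a * (s-x) powr b" using L by (simp add: field_simps)
      finally show ?thesis using xu by (simp add: tpr_def)
    qed
  next
    have "L powr (a + b + 1) = L powr (a+b) * L" using L by (simp add: powr_add)
    then show "Beta (a+1) (b+1) * tpr (a+b+1) (s - u) = L powr (a + b) * (L * Beta (a + 1) (b + 1))"
      using L by (simp add: tpr_def L_def[symmetric])
  qed
qed

lemma core_int:
  assumes a: "a > -1" and b: "b > -1"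
  shows "((\<lambda>x. tpr a (x - u) * tpr b (s - x)) has_integral
           (Beta (a+1) (b+1) * tpr (a+b+1) (s - u))) UNIV"
proof (cases "u < s")
  case True
  have "((\<lambda>x. if x \<in> {u..s} then tpr a (x - u) * tpr b (s - x) else 0) has_integral
           (Beta (a+1) (b+1) * tpr (a+b+1) (s - u))) UNIV"
    using core_int_pos[OF a b True] by (simp only: has_integral_restrict_UNIV)
  moreover have "(\<lambda>x. if x \<in> {u..s} then tpr a (x - u) * tpr b (s - x) else 0)
      = (\<lambda>x. tpr a (x - u) * tpr b (s - x))"
    by (auto simp: tpr_def)
  ultimately show ?thesis by simp
next
  case False
  then have "(\<lambda>x. tpr a (x - u) * tpr b (s - x)) = (\<lambda>x. 0)" by (auto simp: tpr_def)
  moreover have "tpr (a+b+1) (s - u) = 0" using False by (simp add: tpr_def)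
  ultimately show ?thesis by simp
qed

lemma tpr_deriv:
  assumes g: "\<gamma> > 1"
  shows "(tpr \<gamma> has_real_derivative (\<gamma> * tpr (\<gamma>-1) t)) (at t)"
proof (cases "t > 0")
  case True
  have "((\<lambda>z. z powr \<gamma>) has_real_derivative \<gamma> * tpr (\<gamma>-1) t) (at t)"
    using has_real_derivative_powr[OF True] True by (simp add: tpr_def)
  then show ?thesis
    apply (rule has_field_derivative_transform_within_open[of _ _ _ "{0<..}"])
    using True by (auto simp: tpr_def)
next
  case False
  show ?thesis
  proof (cases "t < 0")
    case True
    have "((\<lambda>x. 0) has_real_derivative \<gamma> * tpr (\<gamma>-1) t) (at t)" using True by (simp add: tpr_def)
    then show ?thesis
      apply (rule has_field_derivative_transform_within_open[of _ _ _ "{..<0}"])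
      using True by (auto simp: tpr_def)
  next
    case False2: False
    with False have t0: "t = 0" by simp
    have "((\<lambda>y. (tpr \<gamma> y - tpr \<gamma> 0) / (y - 0)) \<longlongrightarrow> 0) (at 0)"
    proof (rule Lim_null_comparison)
      show "\<forall>\<^sub>F x in at 0. norm ((tpr \<gamma> x - tpr \<gamma> 0) / (x - 0)) \<le> \<bar>x\<bar> powr (\<gamma> - 1)"
      proof (rule always_eventually, rule allI)
        fix x :: real
        show "norm ((tpr \<gamma> x - tpr \<gamma> 0) / (x - 0)) \<le> \<bar>x\<bar> powr (\<gamma> - 1)"
        proof (cases "x > 0")
          case True
          have "x powr \<gamma> / x = x powr (\<gamma> - 1)" using True by (simp add: powr_diff)
          then show ?thesis using True by (simp add: tpr_def)
        qed (simp add: tpr_def)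
      qed
      show "((\<lambda>x. \<bar>x\<bar> powr (\<gamma> - 1)) \<longlongrightarrow> 0) (at 0)"
        by (rule tendsto_zero_powrI) (auto intro!: tendsto_eq_intros simp: g)
    qed
    then show ?thesis using t0 by (simp add: has_field_derivative_iff tpr_def)
  qed
qed

lemma tpr_deriv_L:
  assumes "\<gamma> > 1"
  shows "((\<lambda>z. tpr \<gamma> (z - d)) has_real_derivative (\<gamma> * tpr (\<gamma>-1) (z - d))) (at z)"
proof -
  have "((\<lambda>z. z - d) has_real_derivative 1) (at z)" by (auto intro!: derivative_eq_intros)
  from DERIV_chain2[OF tpr_deriv[OF assms] this] show ?thesis by simp
qed

lemma tpr_deriv_R:
  assumes "\<gamma> > 1"
  shows "((\<lambda>z. tpr \<gamma> (d - z)) has_real_derivative (- (\<gamma> * tpr (\<gamma>-1) (d - z)))) (at z)"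
proof -
  have "((\<lambda>z. d - z) has_real_derivative -1) (at z)" by (auto intro!: derivative_eq_intros)
  from DERIV_chain2[OF tpr_deriv[OF assms] this] show ?thesis by simp
qed

lemma iter_deriv_L:
  assumes "real m < \<gamma>"
  shows "(deriv ^^ m) (\<lambda>z. \<Sum>j\<in>J. c j * tpr \<gamma> (z - d j))
       = (\<lambda>z. \<Sum>j\<in>J. c j * (pochhammer (\<gamma> - m + 1) m * tpr (\<gamma> - m) (z - d j)))"
  using assms
proof (induction m)
  case 0 then show ?case by simp
next
  case (Suc m)
  have IH: "(deriv ^^ m) (\<lambda>z. \<Sum>j\<in>J. c j * tpr \<gamma> (z - d j))
       = (\<lambda>z. \<Sum>j\<in>J. c j * (pochhammer (\<gamma> - m + 1) m * tpr (\<gamma> - m) (z - d j)))"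
    using Suc by simp
  have g: "\<gamma> - m > 1" using Suc.prems by simp
  show ?case
  proof
    fix z
    have "((\<lambda>z. \<Sum>j\<in>J. c j * (pochhammer (\<gamma> - m + 1) m * tpr (\<gamma> - m) (z - d j))) has_real_derivative
         (\<Sum>j\<in>J. c j * (pochhammer (\<gamma> - m + 1) m * ((\<gamma> - m) * tpr (\<gamma> - m - 1) (z - d j))))) (at z)"
      by (intro DERIV_sum DERIV_cmult tpr_deriv_L g)
    then have "deriv (\<lambda>z. \<Sum>j\<in>J. c j * (pochhammer (\<gamma> - m + 1) m * tpr (\<gamma> - m) (z - d j))) z
       = (\<Sum>j\<in>J. c j * (pochhammer (\<gamma> - m + 1) m * ((\<gamma> - m) * tpr (\<gamma> - m - 1) (z - d j))))"
      by (rule DERIV_imp_deriv)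
    moreover have P: "pochhammer (\<gamma> - real (Suc m) + 1) (Suc m) = (\<gamma> - m) * pochhammer (\<gamma> - m + 1) m"
      by (simp add: pochhammer_rec)
    moreover have "\<gamma> - real (Suc m) = \<gamma> - m - 1" by simp
    ultimately show "(deriv ^^ Suc m) (\<lambda>z. \<Sum>j\<in>J. c j * tpr \<gamma> (z - d j)) z =
         (\<Sum>j\<in>J. c j * (pochhammer (\<gamma> - real (Suc m) + 1) (Suc m) * tpr (\<gamma> - real (Suc m)) (z - d j)))"
      using IH by (simp only: funpow.simps comp_def mult_ac)
  qed
qed

lemma iter_deriv_R:
  assumes "real m < \<gamma>"
  shows "(deriv ^^ m) (\<lambda>z. \<Sum>j\<in>J. c j * tpr \<gamma> (d j - z))
       = (\<lambda>z. \<Sum>j\<in>J. c j * ((-1)^m * pochhammer (\<gamma> - m + 1) m * tpr (\<gamma> - m) (d j - z)))"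
  using assms
proof (induction m)
  case 0 then show ?case by simp
next
  case (Suc m)
  have IH: "(deriv ^^ m) (\<lambda>z. \<Sum>j\<in>J. c j * tpr \<gamma> (d j - z))
       = (\<lambda>z. \<Sum>j\<in>J. c j * ((-1)^m * pochhammer (\<gamma> - m + 1) m * tpr (\<gamma> - m) (d j - z)))"
    using Suc by simp
  have g: "\<gamma> - m > 1" using Suc.prems by simp
  show ?case
  proof
    fix z
    have "((\<lambda>z. \<Sum>j\<in>J. c j * ((-1)^m * pochhammer (\<gamma> - m + 1) m * tpr (\<gamma> - m) (d j - z))) has_real_derivative
         (\<Sum>j\<in>J. c j * ((-1)^m * pochhammer (\<gamma> - m + 1) m * (- ((\<gamma> - m) * tpr (\<gamma> - m - 1) (d j - z)))))) (at z)"
      by (intro DERIV_sum DERIV_cmult tpr_deriv_R g)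
    then have "deriv (\<lambda>z. \<Sum>j\<in>J. c j * ((-1)^m * pochhammer (\<gamma> - m + 1) m * tpr (\<gamma> - m) (d j - z))) z
       = (\<Sum>j\<in>J. c j * ((-1)^m * pochhammer (\<gamma> - m + 1) m * (- ((\<gamma> - m) * tpr (\<gamma> - m - 1) (d j - z)))))"
      by (rule DERIV_imp_deriv)
    moreover have P: "pochhammer (\<gamma> - real (Suc m) + 1) (Suc m) = (\<gamma> - m) * pochhammer (\<gamma> - m + 1) m"
      by (simp add: pochhammer_rec)
    moreover have "\<gamma> - real (Suc m) = \<gamma> - m - 1" by simp
    moreover have "((-1::real)^Suc m) = - ((-1)^m)" by simp
    ultimately show "(deriv ^^ Suc m) (\<lambda>z. \<Sum>j\<in>J. c j * tpr \<gamma> (d j - z)) z =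
         (\<Sum>j\<in>J. c j * ((-1)^Suc m * pochhammer (\<gamma> - real (Suc m) + 1) (Suc m) * tpr (\<gamma> - real (Suc m)) (d j - z)))"
      using IH by (simp only: funpow.simps comp_def mult_ac mult_minus_left mult_minus_right)
  qed
qed

lemma binom_id:
  assumes "i \<le> Suc p"
  shows "(real i + 1) * real (Suc p choose Suc i) = (real p + 1 - real i) * real (Suc p choose i)"
proof -
  have 1: "Suc i * (Suc p choose Suc i) = Suc p * (p choose i)" by (rule Suc_times_binomial)
  have 2: "(Suc p - i) * (Suc p choose i) = Suc p * (p choose i)"
    using binomial_absorb_comp[of "Suc p" i] by simp
  have "real (Suc i * (Suc p choose Suc i)) = real ((Suc p - i) * (Suc p choose i))" using 1 2 by (simp only:)
  then show ?thesis using assms by (simp only: of_nat_mult of_nat_diff of_nat_Suc) (simp add: algebra_simps)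
qed

lemma comb_step:
  fixes X Y :: "nat \<Rightarrow> real"
  shows "(\<Sum>j\<le>Suc p. (-1)^j * real (Suc p choose j) * (X j + real j * Y j))
       + (\<Sum>j\<le>Suc p. (-1)^j * real (Suc p choose j) * (- X (Suc j) + (real p + 1 - real j) * Y (Suc j)))
       = (\<Sum>j\<le>Suc (Suc p). (-1)^j * real (Suc (Suc p) choose j) * X j)"
proof -
  have e1: "(\<Sum>j\<le>Suc p. (-1)^j * real (Suc p choose j) * (X j + real j * Y j))
      = (\<Sum>j\<le>Suc (Suc p). (-1)^j * real (Suc p choose j) * (X j + real j * Y j))"
    by (subst (2) sum.atMost_Suc) (simp del: binomial_Suc_Suc)
  have e2: "(\<Sum>j\<le>Suc (Suc p). (-1)^j * real (Suc p choose j) * (X j + real j * Y j))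
      = X 0 + (\<Sum>i\<le>Suc p. (-1)^Suc i * real (Suc p choose Suc i) * (X (Suc i) + real (Suc i) * Y (Suc i)))"
    by (subst sum.atMost_Suc_shift) simp
  have e3: "(\<Sum>j\<le>Suc (Suc p). (-1)^j * real (Suc (Suc p) choose j) * X j)
      = X 0 + (\<Sum>i\<le>Suc p. (-1)^Suc i * real (Suc (Suc p) choose Suc i) * X (Suc i))"
    by (subst sum.atMost_Suc_shift) simp
  have e4: "(\<Sum>i\<le>Suc p. (-1)^Suc i * real (Suc p choose Suc i) * (X (Suc i) + real (Suc i) * Y (Suc i)))
     + (\<Sum>j\<le>Suc p. (-1)^j * real (Suc p choose j) * (- X (Suc j) + (real p + 1 - real j) * Y (Suc j)))
     = (\<Sum>i\<le>Suc p. (-1)^Suc i * real (Suc (Suc p) choose Suc i) * X (Suc i))"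
    unfolding sum.distrib[symmetric]
  proof (rule sum.cong[OF refl])
    fix i assume "i \<in> {..Suc p}"
    then have bi: "(real i + 1) * real (Suc p choose Suc i) = (real p + 1 - real i) * real (Suc p choose i)"
      by (intro binom_id) simp
    have "(-1)^Suc i * real (Suc p choose Suc i) * (X (Suc i) + real (Suc i) * Y (Suc i))
       + (-1)^i * real (Suc p choose i) * (- X (Suc i) + (real p + 1 - real i) * Y (Suc i))
       = (-1)^Suc i * (real (Suc p choose Suc i) + real (Suc p choose i)) * X (Suc i)
         + (-1)^i * ((real p + 1 - real i) * real (Suc p choose i) - (real i + 1) * real (Suc p choose Suc i)) * Y (Suc i)"
      by (simp add: algebra_simps)
    also have "\<dots> = (-1)^Suc i * real (Suc (Suc p) choose Suc i) * X (Suc i)"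
      using bi by simp
    finally show "(-1)^Suc i * real (Suc p choose Suc i) * (X (Suc i) + real (Suc i) * Y (Suc i))
       + (-1)^i * real (Suc p choose i) * (- X (Suc i) + (real p + 1 - real i) * Y (Suc i))
       = (-1)^Suc i * real (Suc (Suc p) choose Suc i) * X (Suc i)" .
  qed
  show ?thesis unfolding e1 e2 e3 using e4 by linarith
qed

definition tp :: "nat \<Rightarrow> real \<Rightarrow> real" where "tp n t = (if 0 \<le> t then t ^ n else 0)"
definition tq :: "nat \<Rightarrow> real \<Rightarrow> real" where "tq n t = (if 0 < t then t ^ n else 0)"

lemma bspline_L:
  "bspline p t = (\<Sum>j\<le>Suc p. (-1)^j * real (Suc p choose j) * tp p (t - real j)) / fact p"
proof (induction p arbitrary: t)
  case 0
  show ?case by (simp add: tp_def)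
next
  case (Suc p)
  define X where "X j = tp (Suc p) (t - real j)" for j
  define Y where "Y j = tp p (t - real j)" for j
  have hX: "t * tp p (t - real j) = X j + real j * Y j" for j
    by (auto simp: X_def Y_def tp_def algebra_simps)
  have hY: "(real p + 2 - t) * tp p (t - 1 - real j) = - X (Suc j) + (real p + 1 - real j) * Y (Suc j)" for j
    by (auto simp: X_def Y_def tp_def algebra_simps)
  define A where "A = (\<Sum>j\<le>Suc p. (-1)^j * real (Suc p choose j) * tp p (t - real j))"
  define A' where "A' = (\<Sum>j\<le>Suc p. (-1)^j * real (Suc p choose j) * tp p (t - 1 - real j))"
  have 1: "bspline p t = A / fact p" unfolding A_def by (rule Suc.IH)
  have 2: "bspline p (t-1) = A' / fact p" unfolding A'_def by (rule Suc.IH)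
  have 3: "bspline (Suc p) t = (t * A + (real p + 2 - t) * A') / fact (Suc p)"
    using fact_gt_zero[of p, where ?'a=real] by (simp add: 1 2 field_simps) (simp add: add_divide_distrib diff_divide_distrib)
  have "t * A + (real p + 2 - t) * A'
      = (\<Sum>j\<le>Suc (Suc p). (-1)^j * real (Suc (Suc p) choose j) * X j)"
    unfolding A_def A'_def
    unfolding comb_step[of p X Y, symmetric] sum_distrib_left
    by (intro arg_cong2[where f="(+)"] sum.cong refl) (subst hX[symmetric] hY[symmetric], simp only: mult_ac)+
  then show ?case
    unfolding 3 by (simp add: X_def)
qed

lemma bspline_R:
  "bspline p t = (\<Sum>j\<le>Suc p. (-1)^j * real (Suc p choose j) * tq p (real p + 1 - real j - t)) / fact p"
proof (induction p arbitrary: t)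
  case 0
  show ?case by (simp add: tq_def)
next
  case (Suc p)
  define X where "X j = tq (Suc p) (real p + 2 - real j - t)" for j
  define Y where "Y j = tq p (real p + 2 - real j - t)" for j
  have hX: "(real p + 2 - t) * tq p (real p + 1 - real j - (t - 1)) = X j + real j * Y j" for j
    by (auto simp: X_def Y_def tq_def algebra_simps)
  have hY: "t * tq p (real p + 1 - real j - t) = - X (Suc j) + (real p + 1 - real j) * Y (Suc j)" for j
    by (auto simp: X_def Y_def tq_def algebra_simps)
  define A where "A = (\<Sum>j\<le>Suc p. (-1)^j * real (Suc p choose j) * tq p (real p + 1 - real j - t))"
  define A' where "A' = (\<Sum>j\<le>Suc p. (-1)^j * real (Suc p choose j) * tq p (real p + 1 - real j - (t - 1)))"
  have 1: "bspline p t = A / fact p" unfolding A_def by (rule Suc.IH)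
  have 2: "bspline p (t-1) = A' / fact p" unfolding A'_def by (rule Suc.IH)
  have 3: "bspline (Suc p) t = ((real p + 2 - t) * A' + t * A) / fact (Suc p)"
    using fact_gt_zero[of p, where ?'a=real] by (simp add: 1 2 field_simps) (simp add: add_divide_distrib diff_divide_distrib)
  have "(real p + 2 - t) * A' + t * A
      = (\<Sum>j\<le>Suc (Suc p). (-1)^j * real (Suc (Suc p) choose j) * X j)"
    unfolding A_def A'_def
    unfolding comb_step[of p X Y, symmetric] sum_distrib_left
    by (intro arg_cong2[where f="(+)"] sum.cong refl) (subst hX[symmetric] hY[symmetric], simp only: mult_ac)+
  then show ?case
    unfolding 3 X_def by (simp add: algebra_simps)
qed

lemma tp_tpr: "p \<ge> 1 \<Longrightarrow> tp p s = tpr (real p) s"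
  by (auto simp: tp_def tpr_def powr_realpow)

lemma tq_tpr: "p \<ge> 1 \<Longrightarrow> tq p s = tpr (real p) s"
  by (auto simp: tq_def tpr_def powr_realpow)

lemma bspline_L':
  assumes "p \<ge> 1"
  shows "bspline p t = (\<Sum>j\<le>Suc p. (-1)^j * real (Suc p choose j) / fact p * tpr (real p) (t - real j))"
  unfolding bspline_L sum_divide_distrib using assms by (simp add: tp_tpr)

lemma bspline_R':
  assumes "p \<ge> 1"
  shows "bspline p t = (\<Sum>j\<le>Suc p. (-1)^j * real (Suc p choose j) / fact p * tpr (real p) (real p + 1 - real j - t))"
  unfolding bspline_R sum_divide_distrib using assms by (simp add: tq_tpr)

lemma frac_ord_props:
  assumes "0 \<le> \<alpha>"
  shows "\<alpha> < real (frac_ord \<alpha>)" "real (frac_ord \<alpha>) - 1 \<le> \<alpha>"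
proof -
  have "real (frac_ord \<alpha>) = of_int \<lfloor>\<alpha>\<rfloor> + 1" using assms by (simp add: frac_ord_def)
  then show "\<alpha> < real (frac_ord \<alpha>)" "real (frac_ord \<alpha>) - 1 \<le> \<alpha>" by linarith+
qed

lemma gamma_const:
  fixes p :: nat and \<alpha> c :: real and m :: nat
  assumes c: "c + 1 = real m - \<alpha>" "c > -1" and ap: "\<alpha> < real p"
  shows "Beta (real p + 1) (c + 1) / fact p * pochhammer (real p + c + 1 - real m + 1) m / Gamma (c + 1)
       = 1 / Gamma (real p - \<alpha> + 1)"
proof -
  have e: "real p + c + 1 - real m + 1 = real p - \<alpha> + 1" using c by simp
  have nz: "real p - \<alpha> + 1 \<notin> \<int>\<^sub>\<le>\<^sub>0" using ap
    by (auto elim!: nonpos_Ints_cases)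
  have P: "pochhammer (real p - \<alpha> + 1) m = Gamma (real p + c + 2) / Gamma (real p - \<alpha> + 1)"
  proof -
    have s: "real p - \<alpha> + 1 + real m = real p + c + 2" using c by simp
    show ?thesis using pochhammer_Gamma[OF nz, of m] unfolding s .
  qed
  have F: "Gamma (real p + 1) = fact p" using Gamma_fact[of p] by (simp add: add.commute)
  have g1: "Gamma (c + 1) > 0" "Gamma (real p + c + 2) > 0" "Gamma (real p - \<alpha> + 1) > 0"
    using c ap by auto
  have "(real p + 1) + (c + 1) = real p + c + 2" by simp
  then show ?thesis unfolding e P Beta_def F using g1 fact_gt_zero[of p, where 'a=real]
    by (simp add: field_simps)
qed

lemma RL_left_bspline:
  assumes p: "p \<ge> 1" and a0: "0 \<le> \<alpha>" and ap: "\<alpha> < real p"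
  shows "RL_left \<alpha> (bspline p) x
     = (\<Sum>j\<le>Suc p. (-1)^j * real (Suc p choose j) * tpr (real p - \<alpha>) (x - real j)) / Gamma (real p - \<alpha> + 1)"
proof -
  define m where "m = frac_ord \<alpha>"
  define c where "c = real m - \<alpha> - 1"
  have c1: "c > -1" "c \<le> 0" using frac_ord_props[OF a0] by (auto simp: c_def m_def)
  define co where "co j = (-1)^j * real (Suc p choose j) / fact p" for j :: nat
  define B where "B = Beta (real p + 1) (c + 1)"
  have F: "(\<lambda>z. integral {..z} (\<lambda>y. (z - y) powr c * bspline p y))
        = (\<lambda>z. \<Sum>j\<le>Suc p. (co j * B) * tpr (real p + c + 1) (z - real j))"
  proof
    fix z
    define g where "g y = (\<Sum>j\<le>Suc p. co j * (tpr (real p) (y - real j) * tpr c (z - y)))" for y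
    have "integral {..z} (\<lambda>y. (z - y) powr c * bspline p y) = integral {..z} g"
    proof (rule integral_cong)
      fix y assume "y \<in> {..z}"
      then have "(z - y) powr c = tpr c (z - y)" by (auto simp: tpr_def)
      then show "(z - y) powr c * bspline p y = g y"
        unfolding g_def bspline_L'[OF p] co_def sum_distrib_left by (simp add: mult_ac)
    qed
    also have "\<dots> = integral UNIV (\<lambda>y. if y \<in> {..z} then g y else 0)"
      by (rule integral_restrict_UNIV[symmetric])
    also have "(\<lambda>y. if y \<in> {..z} then g y else 0) = g"
      by (auto simp: g_def tpr_def)
    also have "integral UNIV g = (\<Sum>j\<le>Suc p. (co j * B) * tpr (real p + c + 1) (z - real j))"
    proof (rule integral_unique)
      show "(g has_integral (\<Sum>j\<le>Suc p. (co j * B) * tpr (real p + c + 1) (z - real j))) UNIV"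
        unfolding g_def
      proof (rule has_integral_sum[OF finite_atMost])
        fix j assume "j \<in> {..Suc p}"
        have "((\<lambda>y. tpr (real p) (y - real j) * tpr c (z - y)) has_integral
           (Beta (real p + 1) (c + 1) * tpr (real p + c + 1) (z - real j))) UNIV"
          using core_int[of "real p" c "real j" z] c1 by simp
        from has_integral_mult_right[OF this, of "co j"]
        show "((\<lambda>y. co j * (tpr (real p) (y - real j) * tpr c (z - y))) has_integral
               co j * B * tpr (real p + c + 1) (z - real j)) UNIV"
          by (simp add: B_def mult_ac)
      qed
    qed
    finally show "integral {..z} (\<lambda>y. (z - y) powr c * bspline p y)
        = (\<Sum>j\<le>Suc p. (co j * B) * tpr (real p + c + 1) (z - real j))" .
  qed
  have mg: "real m < real p + c + 1" using ap by (simp add: c_def)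
  have "RL_left \<alpha> (bspline p) x = (deriv ^^ m) (\<lambda>z. \<Sum>j\<le>Suc p. (co j * B) * tpr (real p + c + 1) (z - real j)) x
        / Gamma (c + 1)"
    unfolding RL_left_def F[unfolded c_def m_def] by (simp add: c_def m_def)
  also have "\<dots> = (\<Sum>j\<le>Suc p. co j * B * (pochhammer (real p + c + 1 - real m + 1) m
                      * tpr (real p + c + 1 - real m) (x - real j))) / Gamma (c + 1)"
    unfolding iter_deriv_L[OF mg] ..
  also have "\<dots> = (\<Sum>j\<le>Suc p. (-1)^j * real (Suc p choose j) * tpr (real p - \<alpha>) (x - real j))
       * (B / fact p * pochhammer (real p + c + 1 - real m + 1) m / Gamma (c + 1))"
    unfolding sum_divide_distrib sum_distrib_right
    by (intro sum.cong refl) (simp add: co_def c_def)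
  also have "B / fact p * pochhammer (real p + c + 1 - real m + 1) m / Gamma (c + 1) = 1 / Gamma (real p - \<alpha> + 1)"
    unfolding B_def by (rule gamma_const) (use c1 ap in \<open>auto simp: c_def\<close>)
  finally show ?thesis by simp
qed

lemma RL_right_bspline:
  assumes p: "p \<ge> 1" and a0: "0 \<le> \<alpha>" and ap: "\<alpha> < real p"
  shows "RL_right \<alpha> (bspline p) x
     = (\<Sum>j\<le>Suc p. (-1)^j * real (Suc p choose j) * tpr (real p - \<alpha>) (real p + 1 - real j - x)) / Gamma (real p - \<alpha> + 1)"
proof -
  define m where "m = frac_ord \<alpha>"
  define c where "c = real m - \<alpha> - 1"
  have c1: "c > -1" "c \<le> 0" using frac_ord_props[OF a0] by (auto simp: c_def m_def)
  define co where "co j = (-1)^j * real (Suc p choose j) / fact p" for j :: nat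
  define B where "B = Beta (real p + 1) (c + 1)"
  define sj where "sj j = real p + 1 - real j" for j :: nat
  have F: "(\<lambda>z. integral {z..} (\<lambda>y. (y - z) powr c * bspline p y))
        = (\<lambda>z. \<Sum>j\<le>Suc p. (co j * B) * tpr (real p + c + 1) (sj j - z))"
  proof
    fix z
    define g where "g y = (\<Sum>j\<le>Suc p. co j * (tpr c (y - z) * tpr (real p) (sj j - y)))" for y
    have "integral {z..} (\<lambda>y. (y - z) powr c * bspline p y) = integral {z..} g"
    proof (rule integral_cong)
      fix y assume "y \<in> {z..}"
      then have "(y - z) powr c = tpr c (y - z)" by (auto simp: tpr_def)
      then show "(y - z) powr c * bspline p y = g y"
        unfolding g_def bspline_R'[OF p] co_def sj_def sum_distrib_left by (simp add: mult_ac)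
    qed
    also have "\<dots> = integral UNIV (\<lambda>y. if y \<in> {z..} then g y else 0)"
      by (rule integral_restrict_UNIV[symmetric])
    also have "(\<lambda>y. if y \<in> {z..} then g y else 0) = g"
      by (auto simp: g_def tpr_def)
    also have "integral UNIV g = (\<Sum>j\<le>Suc p. (co j * B) * tpr (real p + c + 1) (sj j - z))"
    proof (rule integral_unique)
      show "(g has_integral (\<Sum>j\<le>Suc p. (co j * B) * tpr (real p + c + 1) (sj j - z))) UNIV"
        unfolding g_def
      proof (rule has_integral_sum[OF finite_atMost])
        fix j assume "j \<in> {..Suc p}"
        have "((\<lambda>y. tpr c (y - z) * tpr (real p) (sj j - y)) has_integral
           (Beta (c + 1) (real p + 1) * tpr (c + real p + 1) (sj j - z))) UNIV"
          using core_int[of c "real p" z "sj j"] c1 by simp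
        from has_integral_mult_right[OF this, of "co j"]
        show "((\<lambda>y. co j * (tpr c (y - z) * tpr (real p) (sj j - y))) has_integral
               co j * B * tpr (real p + c + 1) (sj j - z)) UNIV"
          by (simp add: B_def mult_ac Beta_commute add_ac)
      qed
    qed
    finally show "integral {z..} (\<lambda>y. (y - z) powr c * bspline p y)
        = (\<Sum>j\<le>Suc p. (co j * B) * tpr (real p + c + 1) (sj j - z))" .
  qed
  have mg: "real m < real p + c + 1" using ap by (simp add: c_def)
  have "RL_right \<alpha> (bspline p) x = (-1)^m / Gamma (c + 1) *
        (deriv ^^ m) (\<lambda>z. \<Sum>j\<le>Suc p. (co j * B) * tpr (real p + c + 1) (sj j - z)) x"
    unfolding RL_right_def F[unfolded c_def m_def] by (simp add: c_def m_def)
  also have "\<dots> = (-1)^m / Gamma (c + 1) * (\<Sum>j\<le>Suc p. co j * B * ((-1)^m * pochhammer (real p + c + 1 - real m + 1) m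
                      * tpr (real p + c + 1 - real m) (sj j - x)))"
    unfolding iter_deriv_R[OF mg] ..
  also have "\<dots> = (\<Sum>j\<le>Suc p. (-1)^j * real (Suc p choose j) * tpr (real p - \<alpha>) (real p + 1 - real j - x))
       * (B / fact p * pochhammer (real p + c + 1 - real m + 1) m / Gamma (c + 1))"
    unfolding sum_distrib_left sum_distrib_right
  proof (intro sum.cong refl)
    fix j
    have mm: "(-1::real)^m * (-1)^m = 1" by (simp flip: power_add)
    show "(-1)^m / Gamma (c + 1) * (co j * B * ((-1)^m * pochhammer (real p + c + 1 - real m + 1) m
                      * tpr (real p + c + 1 - real m) (sj j - x)))
       = (-1)^j * real (Suc p choose j) * tpr (real p - \<alpha>) (real p + 1 - real j - x)
       * (B / fact p * pochhammer (real p + c + 1 - real m + 1) m / Gamma (c + 1))"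
      using mm by (simp add: co_def c_def sj_def field_simps)
  qed
  also have "B / fact p * pochhammer (real p + c + 1 - real m + 1) m / Gamma (c + 1) = 1 / Gamma (real p - \<alpha> + 1)"
    unfolding B_def by (rule gamma_const) (use c1 ap in \<open>auto simp: c_def\<close>)
  finally show ?thesis by simp
qed

lemma conv_sum:
  fixes F :: "nat \<Rightarrow> real"
  shows "(\<Sum>j\<le>n1. \<Sum>l\<le>n2. ((-1)^j * real (n1 choose j)) * ((-1)^l * real (n2 choose l)) * F (j + l))
       = (\<Sum>i\<le>n1 + n2. (-1)^i * real ((n1 + n2) choose i) * F i)"
proof -
  define h where "h j l = (-1)^(j+l) * real ((n1 choose j) * (n2 choose l)) * F (j + l)" for j l
  define T where "T = {(i,j). i + j \<le> n1 + n2}"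
  have fT: "finite T"
    by (rule finite_subset[of _ "{..n1+n2} \<times> {..n1+n2}"]) (auto simp: T_def)
  have "(\<Sum>j\<le>n1. \<Sum>l\<le>n2. ((-1)^j * real (n1 choose j)) * ((-1)^l * real (n2 choose l)) * F (j + l))
      = (\<Sum>j\<le>n1. \<Sum>l\<le>n2. h j l)"
    by (intro sum.cong refl) (simp add: h_def power_add mult_ac)
  also have "\<dots> = (\<Sum>(j,l)\<in>{..n1} \<times> {..n2}. h j l)"
    by (simp add: sum.cartesian_product)
  also have "\<dots> = (\<Sum>(j,l)\<in>T. h j l)"
    by (rule sum.mono_neutral_left[OF fT]) (auto simp: T_def h_def)
  also have "\<dots> = (\<Sum>i\<le>n1 + n2. \<Sum>j\<le>i. h j (i - j))"
    unfolding T_def by (rule sum.triangle_reindex_eq)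
  also have "\<dots> = (\<Sum>i\<le>n1 + n2. (-1)^i * real ((n1 + n2) choose i) * F i)"
  proof (intro sum.cong refl)
    fix i
    have "(\<Sum>j\<le>i. h j (i - j)) = (\<Sum>j\<le>i. (-1)^i * F i * real ((n1 choose j) * (n2 choose (i - j))))"
      by (intro sum.cong refl) (simp add: h_def)
    also have "\<dots> = (-1)^i * F i * real (\<Sum>j\<le>i. (n1 choose j) * (n2 choose (i - j)))"
      by (simp add: sum_distrib_left)
    also have "\<dots> = (-1)^i * real ((n1 + n2) choose i) * F i"
      by (simp add: vandermonde)
    finally show "(\<Sum>j\<le>i. h j (i - j)) = (-1)^i * real ((n1 + n2) choose i) * F i" .
  qed
  finally show ?thesis .
qed

theorem theorem3p3:
  fixes p1 p2 :: nat and \<alpha>1 \<alpha>2 k :: real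
  assumes "p1 \<ge> 1" and "p2 \<ge> 1"
    and "0 \<le> \<alpha>1" and "\<alpha>1 < real p1"
    and "0 \<le> \<alpha>2" and "\<alpha>2 < real p2"
  shows "integral UNIV (\<lambda>x. RL_left \<alpha>1 (bspline p1) x * RL_right \<alpha>2 (bspline p2) (x + k))
           = RL_left (\<alpha>1 + \<alpha>2) (bspline (p1 + p2 + 1)) (real p2 + 1 - k)
       \<and> integral UNIV (\<lambda>x. RL_right \<alpha>1 (bspline p1) x * RL_left \<alpha>2 (bspline p2) (x + k))
           = RL_right (\<alpha>1 + \<alpha>2) (bspline (p1 + p2 + 1)) (real p2 + 1 - k)"
proof -
  note as = assms
  define a where "a = real p1 - \<alpha>1"
  define b where "b = real p2 - \<alpha>2"
  have a0: "a > 0" and b0: "b > 0" using as by (auto simp: a_def b_def)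
  define G where "G = Gamma (a + 1) * Gamma (b + 1)"
  have Gpos: "G > 0" using a0 b0 by (simp add: G_def)
  define Bt where "Bt = Beta (a + 1) (b + 1)"
  have BtG: "Bt / G = 1 / Gamma (a + b + 1 + 1)"
  proof -
    have "a + 1 + (b + 1) = a + b + 1 + 1" by simp
    moreover have "Gamma (a + b + 1 + 1) > 0" using a0 b0 by simp
    moreover have "Gamma (a + 1) > 0" "Gamma (b + 1) > 0" using a0 b0 by simp_all
    ultimately show ?thesis using Gpos unfolding Bt_def Beta_def G_def by (simp add: field_simps)
  qed
  define A1 where "A1 j = (-1)^j * real (Suc p1 choose j)" for j
  define A2 where "A2 j = (-1)^j * real (Suc p2 choose j)" for j
  have eP: "Suc (p1 + p2 + 1) = Suc p1 + Suc p2" by simp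
  have eA: "real (p1 + p2 + 1) - (\<alpha>1 + \<alpha>2) = a + b + 1" by (simp add: a_def b_def)
  have sa: "0 \<le> \<alpha>1 + \<alpha>2" "\<alpha>1 + \<alpha>2 < real (p1 + p2 + 1)" "p1 + p2 + 1 \<ge> 1" using as by auto

  define F1 where "F1 i = tpr (a + b + 1) (real p2 + 1 - k - real i)" for i :: nat
  have f1: "(\<lambda>x. RL_left \<alpha>1 (bspline p1) x * RL_right \<alpha>2 (bspline p2) (x + k))
     = (\<lambda>x. \<Sum>j\<le>Suc p1. \<Sum>l\<le>Suc p2. (A1 j * A2 l / G) * (tpr a (x - real j) * tpr b ((real p2 + 1 - real l - k) - x)))"
  proof
    fix x
    have e: "real p2 + 1 - real l - (x + k) = (real p2 + 1 - real l - k) - x" for l by simp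
    show "RL_left \<alpha>1 (bspline p1) x * RL_right \<alpha>2 (bspline p2) (x + k)
     = (\<Sum>j\<le>Suc p1. \<Sum>l\<le>Suc p2. (A1 j * A2 l / G) * (tpr a (x - real j) * tpr b ((real p2 + 1 - real l - k) - x)))"
      unfolding RL_left_bspline[OF as(1,3,4)] RL_right_bspline[OF as(2,5,6)] e
      unfolding times_divide_times_eq sum_product sum_divide_distrib
      by (intro sum.cong refl) (simp add: A1_def A2_def G_def a_def b_def mult_ac)
  qed
  have h1: "((\<lambda>x. RL_left \<alpha>1 (bspline p1) x * RL_right \<alpha>2 (bspline p2) (x + k)) has_integral
     (\<Sum>j\<le>Suc p1. \<Sum>l\<le>Suc p2. (A1 j * A2 l / G) * (Bt * tpr (a + b + 1) ((real p2 + 1 - real l - k) - real j)))) UNIV"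
    unfolding f1
  proof (intro has_integral_sum finite_atMost)
    fix j l
    show "((\<lambda>x. (A1 j * A2 l / G) * (tpr a (x - real j) * tpr b ((real p2 + 1 - real l - k) - x))) has_integral
       (A1 j * A2 l / G) * (Bt * tpr (a + b + 1) ((real p2 + 1 - real l - k) - real j))) UNIV"
      using core_int[of a b "real j" "real p2 + 1 - real l - k"] a0 b0
      by (intro has_integral_mult_right) (simp add: Bt_def)
  qed
  have I1: "integral UNIV (\<lambda>x. RL_left \<alpha>1 (bspline p1) x * RL_right \<alpha>2 (bspline p2) (x + k))
      = (\<Sum>j\<le>Suc p1. \<Sum>l\<le>Suc p2. A1 j * A2 l * F1 (j + l)) * (Bt / G)"
    unfolding integral_unique[OF h1] sum_distrib_right
    by (intro sum.cong refl) (simp add: F1_def algebra_simps)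
  have R1: "RL_left (\<alpha>1 + \<alpha>2) (bspline (p1 + p2 + 1)) (real p2 + 1 - k)
      = (\<Sum>i\<le>Suc p1 + Suc p2. (-1)^i * real ((Suc p1 + Suc p2) choose i) * F1 i) / Gamma (a + b + 1 + 1)"
    unfolding RL_left_bspline[OF sa(3,1,2)] eP eA F1_def ..
  have P1: "integral UNIV (\<lambda>x. RL_left \<alpha>1 (bspline p1) x * RL_right \<alpha>2 (bspline p2) (x + k))
           = RL_left (\<alpha>1 + \<alpha>2) (bspline (p1 + p2 + 1)) (real p2 + 1 - k)"
    unfolding I1 R1 BtG A1_def A2_def conv_sum by simp

  define F2 where "F2 i = tpr (a + b + 1) (real p1 + 1 + k - real i)" for i :: nat
  have f2: "(\<lambda>x. RL_right \<alpha>1 (bspline p1) x * RL_left \<alpha>2 (bspline p2) (x + k))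
     = (\<lambda>x. \<Sum>l\<le>Suc p1. \<Sum>j\<le>Suc p2. (A1 l * A2 j / G) * (tpr b (x - (real j - k)) * tpr a ((real p1 + 1 - real l) - x)))"
  proof
    fix x
    have e: "x + k - real j = x - (real j - k)" for j by simp
    show "RL_right \<alpha>1 (bspline p1) x * RL_left \<alpha>2 (bspline p2) (x + k)
     = (\<Sum>l\<le>Suc p1. \<Sum>j\<le>Suc p2. (A1 l * A2 j / G) * (tpr b (x - (real j - k)) * tpr a ((real p1 + 1 - real l) - x)))"
      unfolding RL_left_bspline[OF as(2,5,6)] RL_right_bspline[OF as(1,3,4)] e
      unfolding times_divide_times_eq sum_product sum_divide_distrib
      by (intro sum.cong refl) (simp add: A1_def A2_def G_def a_def b_def mult_ac)
  qed
  have h2: "((\<lambda>x. RL_right \<alpha>1 (bspline p1) x * RL_left \<alpha>2 (bspline p2) (x + k)) has_integral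
     (\<Sum>l\<le>Suc p1. \<Sum>j\<le>Suc p2. (A1 l * A2 j / G) * (Bt * tpr (a + b + 1) ((real p1 + 1 - real l) - (real j - k))))) UNIV"
    unfolding f2
  proof (intro has_integral_sum finite_atMost)
    fix j l
    show "((\<lambda>x. (A1 l * A2 j / G) * (tpr b (x - (real j - k)) * tpr a ((real p1 + 1 - real l) - x))) has_integral
       (A1 l * A2 j / G) * (Bt * tpr (a + b + 1) ((real p1 + 1 - real l) - (real j - k)))) UNIV"
      using core_int[of b a "real j - k" "real p1 + 1 - real l"] a0 b0
      by (intro has_integral_mult_right) (simp add: Bt_def Beta_commute add_ac)
  qed
  have I2: "integral UNIV (\<lambda>x. RL_right \<alpha>1 (bspline p1) x * RL_left \<alpha>2 (bspline p2) (x + k))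
      = (\<Sum>l\<le>Suc p1. \<Sum>j\<le>Suc p2. A1 l * A2 j * F2 (l + j)) * (Bt / G)"
    unfolding integral_unique[OF h2] sum_distrib_right
    by (intro sum.cong refl) (simp add: F2_def algebra_simps)
  have eR: "real (p1 + p2 + 1) + 1 - real i - (real p2 + 1 - k) = real p1 + 1 + k - real i" for i
    by simp
  have R2: "RL_right (\<alpha>1 + \<alpha>2) (bspline (p1 + p2 + 1)) (real p2 + 1 - k)
      = (\<Sum>i\<le>Suc p1 + Suc p2. (-1)^i * real ((Suc p1 + Suc p2) choose i) * F2 i) / Gamma (a + b + 1 + 1)"
    unfolding RL_right_bspline[OF sa(3,1,2)] eP eA F2_def eR ..
  have P2: "integral UNIV (\<lambda>x. RL_right \<alpha>1 (bspline p1) x * RL_left \<alpha>2 (bspline p2) (x + k))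
           = RL_right (\<alpha>1 + \<alpha>2) (bspline (p1 + p2 + 1)) (real p2 + 1 - k)"
    unfolding I2 R2 BtG A1_def A2_def conv_sum by simp
  show ?thesis using P1 P2 by blast
qed

end
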